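(* Let $k$ be a positive integer and $p$ a prime. Then: (1) every integer of the form $p_1^{2p^k-1}$ with $p_1$ prime is $p^k$-$T_0T^\ast$-perfect; (2) if $k\ge 2$ and $p$ is odd, then every integer of the form $p_1^{(p^{a_1}-1)/2}\cdot p_2^{(p^{a_2}-1)/2}$, where $p_1\neq p_2$ are primes and $a_1,a_2$ are positive integers with $a_1+a_2=k$, is $p^k$-$T_0T^\ast$-perfect; (3) every integer $n>1$ that is $p^k$-$T_0T^\ast$-perfect is either of the form $p_1^{2p^k-1}$ with $p_1$ prime, or (with $p$ odd) of the form $p_1^{(p^{a_1}-1)/2}\cdot p_2^{(p^{a_2}-1)/2}$ with distinct primes $p_1,p_2$ and positive integers $a_1,a_2$ with $a_1+a_2=k$.
   Context: For a positive integer $m$, $T(m)$ denotes the product of all positive divisors of $m$, and $T^\ast(m)$ the product of all unitary divisors of $m$ (divisors $d$ with $\gcd(d,m/d)=1$). For an integer $K\ge 2$, an integer $n>1$ is called $K$-$T_0T^\ast$-perfect if $T(T^\ast(n))=n^K$. *)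

theory Defs
  imports "HOL-Computational_Algebra.Primes"
begin

definition divisor_prod :: "nat \<Rightarrow> nat" where
  "divisor_prod m = (\<Prod>d\<in>{d. d dvd m}. d)"

definition unitary_divisors :: "nat \<Rightarrow> nat set" where
  "unitary_divisors m = {d. d dvd m \<and> coprime d (m div d)}"

definition unitary_divisor_prod :: "nat \<Rightarrow> nat" where
  "unitary_divisor_prod m = (\<Prod>d\<in>unitary_divisors m. d)"

definition T0Tstar_perfect :: "nat \<Rightarrow> nat \<Rightarrow> bool" where
  "T0Tstar_perfect K n \<longleftrightarrow> 2 \<le> K \<and> 1 < n \<and> divisor_prod (unitary_divisor_prod n) = n ^ K"

end

theory Submission
  imports Defs "HOL-Library.FuncSet"
begin


lemma prod_sq:
  fixes m :: nat
  assumes m: "m > 0" and D: "D \<subseteq> {d. d dvd m}" and cl: "\<And>d. d \<in> D \<Longrightarrow> m div d \<in> D"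
  shows "(\<Prod>d\<in>D. d)^2 = m ^ card D"
proof -
  have fin: "finite D" using finite_subset[OF D finite_divisors_nat[OF m]] .
  have inv: "m div (m div d) = d" if "d \<in> D" for d
  proof -
    from that D obtain k where k: "m = d * k" by auto
    with m have "d > 0" "k > 0" by auto
    with k show ?thesis by simp
  qed
  have "(\<Prod>d\<in>D. d) = (\<Prod>d\<in>D. m div d)"
    by (rule prod.reindex_bij_witness[of D "\<lambda>d. m div d" "\<lambda>d. m div d"]) (auto simp: inv cl)
  hence "(\<Prod>d\<in>D. d)^2 = (\<Prod>d\<in>D. d) * (\<Prod>d\<in>D. m div d)" by (simp add: power2_eq_square)
  also have "\<dots> = (\<Prod>d\<in>D. d * (m div d))" by (simp add: prod.distrib)
  also have "\<dots> = (\<Prod>d\<in>D. m)" using D by (intro prod.cong) auto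
  also have "\<dots> = m ^ card D" by simp
  finally show ?thesis .
qed

lemma mpp:
  fixes P :: "nat set"
  assumes "finite P" "\<And>x. x \<in> P \<Longrightarrow> prime x" "prime q"
  shows "multiplicity q (\<Prod>p\<in>P. p ^ g p) = (if q \<in> P then g q else 0)"
  by (rule multiplicity_prod_prime_powers[OF assms])

lemma surj_part:
  fixes n :: nat and A :: "nat \<Rightarrow> nat set" and g :: "nat \<Rightarrow> nat"
  assumes n: "n > 0" and A: "\<And>p. p \<in> prime_factors n \<Longrightarrow> A p \<subseteq> {0..multiplicity p n}"
   and g: "g \<in> PiE (prime_factors n) A"
  shows "\<exists>d. d dvd n \<and> (\<forall>p\<in>prime_factors n. multiplicity p d \<in> A p) \<and> restrict (\<lambda>p. multiplicity p d) (prime_factors n) = g"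
proof -
  define P where "P = prime_factors n"
  have finP: "finite P" unfolding P_def by simp
  have primP: "\<And>x. x \<in> P \<Longrightarrow> prime x" unfolding P_def by auto
  define d where "d = (\<Prod>p\<in>P. p ^ g p)"
  have md: "multiplicity q d = (if q \<in> P then g q else 0)" if "prime q" for q
    unfolding d_def using finP primP that by (rule mpp)
  have "\<And>p. p \<in> P \<Longrightarrow> 0 < p ^ g p" using primP by (simp add: prime_gt_0_nat)
  hence "d > 0" unfolding d_def by (rule prod_pos)
  hence d0: "d \<noteq> 0" by simp
  have "d dvd n"
  proof (rule multiplicity_le_imp_dvd[OF d0])
    fix q :: nat assume q: "prime q"
    show "multiplicity q d \<le> multiplicity q n"
    proof (cases "q \<in> P")
      case True
      with g have "g q \<in> A q" unfolding P_def by auto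
      with A[of q] True show ?thesis using md[OF q] unfolding P_def by auto
    next
      case False thus ?thesis by (simp add: md[OF q])
    qed
  qed
  moreover have "\<forall>p\<in>P. multiplicity p d \<in> A p" using g md primP unfolding P_def by auto
  moreover have "restrict (\<lambda>p. multiplicity p d) P = g"
  proof (rule ext)
    fix x show "restrict (\<lambda>p. multiplicity p d) P x = g x"
    proof (cases "x \<in> P")
      case True thus ?thesis using md[OF primP[OF True]] True by simp
    next
      case False thus ?thesis using PiE_arb[OF g[folded P_def] False] by simp
    qed
  qed
  ultimately show ?thesis unfolding P_def by blast
qed
lemma card_divs:
  fixes n :: nat and A :: "nat \<Rightarrow> nat set"
  assumes n: "n > 0" and A: "\<And>p. p \<in> prime_factors n \<Longrightarrow> A p \<subseteq> {0..multiplicity p n}"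
  shows "card {d. d dvd n \<and> (\<forall>p\<in>prime_factors n. multiplicity p d \<in> A p)}
         = (\<Prod>p\<in>prime_factors n. card (A p))"
proof -
  define P where "P = prime_factors n"
  define S where "S = {d. d dvd n \<and> (\<forall>p\<in>P. multiplicity p d \<in> A p)}"
  have finP: "finite P" unfolding P_def by simp
  have inj: "inj_on (\<lambda>d. restrict (\<lambda>p. multiplicity p d) P) S"
  proof (rule inj_onI)
    fix d d' assume d: "d \<in> S" and d': "d' \<in> S"
      and eq: "restrict (\<lambda>p. multiplicity p d) P = restrict (\<lambda>p. multiplicity p d') P"
    from d d' n have pos: "d > 0" "d' > 0" unfolding S_def by (auto intro: dvd_pos_nat)
    show "d = d'"
    proof (rule multiplicity_eq_nat[OF pos])
      fix q :: nat assume q: "prime q"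
      show "multiplicity q d = multiplicity q d'"
      proof (cases "q \<in> P")
        case True thus ?thesis using fun_cong[OF eq, of q] by simp
      next
        case False
        hence "multiplicity q n = 0" using q unfolding P_def prime_factors_multiplicity by auto
        moreover have "multiplicity q d \<le> multiplicity q n" "multiplicity q d' \<le> multiplicity q n"
          using d d' n unfolding S_def by (auto intro!: dvd_imp_multiplicity_le)
        ultimately show ?thesis by simp
      qed
    qed
  qed
  have im: "(\<lambda>d. restrict (\<lambda>p. multiplicity p d) P) ` S = PiE P A"
  proof
    show "(\<lambda>d. restrict (\<lambda>p. multiplicity p d) P) ` S \<subseteq> PiE P A"
      unfolding S_def by auto
    show "PiE P A \<subseteq> (\<lambda>d. restrict (\<lambda>p. multiplicity p d) P) ` S"
    proof
      fix g assume g: "g \<in> PiE P A"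
      from surj_part[OF n A] g obtain d where "d dvd n" "\<forall>p\<in>P. multiplicity p d \<in> A p"
         "restrict (\<lambda>p. multiplicity p d) P = g" unfolding P_def by blast
      thus "g \<in> (\<lambda>d. restrict (\<lambda>p. multiplicity p d) P) ` S" unfolding S_def by blast
    qed
  qed
  have "card S = card (PiE P A)" using bij_betw_same_card[of _ S] inj im unfolding bij_betw_def by blast
  also have "\<dots> = (\<Prod>p\<in>P. card (A p))" using card_PiE[OF finP] .
  finally show ?thesis unfolding S_def P_def .
qed



lemma unitary_char:
  fixes n :: nat assumes n: "n > 0"
  shows "unitary_divisors n = {d. d dvd n \<and> (\<forall>p\<in>prime_factors n. multiplicity p d \<in> {0, multiplicity p n})}"
proof -
  have key: "coprime d (n div d) \<longleftrightarrow> (\<forall>p\<in>prime_factors n. multiplicity p d \<in> {0, multiplicity p n})"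
    if dn: "d dvd n" for d
  proof -
    obtain e where e: "n = d * e" using dn by blast
    have d0: "d > 0" "e > 0" using n e by auto
    have ne: "n div d = e" using e d0 by simp
    have mul: "multiplicity p n = multiplicity p d + multiplicity p e" if "prime p" for p
      using e d0 prime_elem_multiplicity_mult_distrib[of p d e] prime_imp_prime_elem[OF that] by simp
    show ?thesis
    proof
      assume cop: "coprime d (n div d)"
      show "\<forall>p\<in>prime_factors n. multiplicity p d \<in> {0, multiplicity p n}"
      proof
        fix p assume p: "p \<in> prime_factors n"
        hence pp: "prime p" by auto
        have "\<not> (p dvd d \<and> p dvd e)"
        proof
          assume "p dvd d \<and> p dvd e"
          hence "is_unit p" using cop unfolding ne by (meson coprime_common_divisor)
          with pp show False by auto
        qed
        hence "multiplicity p d = 0 \<or> multiplicity p e = 0"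
          using prime_multiplicity_gt_zero_iff[of p d] prime_multiplicity_gt_zero_iff[of p e] pp d0 by auto
        with mul[OF pp] show "multiplicity p d \<in> {0, multiplicity p n}" by auto
      qed
    next
      assume H: "\<forall>p\<in>prime_factors n. multiplicity p d \<in> {0, multiplicity p n}"
      show "coprime d (n div d)" unfolding ne
      proof (rule ccontr)
        assume "\<not> coprime d e"
        then have "gcd d e \<noteq> 1" by (simp add: coprime_iff_gcd_eq_1)
        then obtain p where pp: "prime p" "p dvd gcd d e" using prime_factor_nat by blast
        hence "p dvd d" "p dvd e" by auto
        hence g: "multiplicity p d > 0" "multiplicity p e > 0"
          using prime_multiplicity_gt_zero_iff[of p d] prime_multiplicity_gt_zero_iff[of p e] pp d0 by auto
        hence "p \<in> prime_factors n" using mul[OF pp(1)] pp(1) by (auto simp: prime_factors_multiplicity)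
        with H have "multiplicity p d \<in> {0, multiplicity p n}" by blast
        with mul[OF pp(1)] g show False by auto
      qed
    qed
  qed
  show ?thesis unfolding unitary_divisors_def using key by blast
qed

lemma card_unitary:
  fixes n :: nat assumes n: "n > 0"
  shows "card (unitary_divisors n) = 2 ^ card (prime_factors n)"
proof -
  have "card (unitary_divisors n) = (\<Prod>p\<in>prime_factors n. card {0, multiplicity p n})"
    unfolding unitary_char[OF n] by (rule card_divs[OF n]) auto
  also have "\<dots> = (\<Prod>p\<in>prime_factors n. 2)"
    by (intro prod.cong refl) (auto simp: prime_factors_multiplicity)
  finally show ?thesis by simp
qed

lemma card_divisors:
  fixes m :: nat assumes m: "m > 0"
  shows "card {d. d dvd m} = (\<Prod>p\<in>prime_factors m. multiplicity p m + 1)"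
proof -
  have "{d. d dvd m} = {d. d dvd m \<and> (\<forall>p\<in>prime_factors m. multiplicity p d \<in> {0..multiplicity p m})}"
    using dvd_imp_multiplicity_le m by auto
  also have "card \<dots> = (\<Prod>p\<in>prime_factors m. card {0..multiplicity p m})"
    by (rule card_divs[OF m]) auto
  finally show ?thesis by simp
qed

lemma div_inv_aux:
  fixes n d :: nat assumes "n > 0" "d dvd n"
  shows "n div d dvd n" "n div (n div d) = d"
proof -
  obtain k where k: "n = d * k" using assms by blast
  with assms have "d > 0" "k > 0" by auto
  with k show "n div d dvd n" "n div (n div d) = d" by auto
qed

lemma udp_sq:
  fixes n :: nat assumes n: "n > 0"
  shows "(unitary_divisor_prod n)^2 = n ^ card (unitary_divisors n)"
  unfolding unitary_divisor_prod_def
proof (rule prod_sq[OF n])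
  show "unitary_divisors n \<subseteq> {d. d dvd n}" unfolding unitary_divisors_def by auto
  fix d assume "d \<in> unitary_divisors n"
  thus "n div d \<in> unitary_divisors n" unfolding unitary_divisors_def
    using div_inv_aux[OF n] by (auto simp: coprime_commute)
qed

lemma dp_sq:
  fixes m :: nat assumes m: "m > 0"
  shows "(divisor_prod m)^2 = m ^ card {d. d dvd m}"
  unfolding divisor_prod_def
  by (rule prod_sq[OF m]) (auto intro: div_inv_aux[OF m])



lemma crit:
  fixes n K :: nat assumes n1: "n > 1"
  shows "T0Tstar_perfect K n \<longleftrightarrow> 2 \<le> K \<and>
     4 * K = 2 ^ card (prime_factors n) *
       (\<Prod>p\<in>prime_factors n. multiplicity p n * 2 ^ (card (prime_factors n) - 1) + 1)"
proof -
  define P where "P = prime_factors n"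
  define s where "s = card P"
  define m where "m = unitary_divisor_prod n"
  define t where "t = (\<Prod>p\<in>P. multiplicity p n * 2 ^ (s - 1) + 1)"
  have n: "n > 0" using n1 by simp
  obtain p0 where p0: "prime p0" "p0 dvd n" using prime_factor_nat[of n] n1 by auto
  have "p0 \<in> P" unfolding P_def using p0 n by (auto simp: in_prime_factors_iff)
  moreover have "finite P" unfolding P_def by simp
  ultimately have "card P > 0" by (auto simp: card_gt_0_iff)
  hence s1: "s \<ge> 1" unfolding s_def by simp
  have s2: "(2::nat) ^ s = 2 * 2 ^ (s - 1)" using s1 by (cases s) auto
  have u: "card (unitary_divisors n) = 2 * 2 ^ (s - 1)"
    using card_unitary[OF n] s2 unfolding s_def P_def by simp
  have msq: "m^2 = n ^ (2 * 2 ^ (s - 1))" using udp_sq[OF n] u unfolding m_def by simp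
  have "m^2 > 0" unfolding msq using n by simp
  hence m0: "m > 0" by (cases "m = 0") auto
  have mm: "multiplicity q m = multiplicity q n * 2 ^ (s - 1)" if q: "prime q" for q
  proof -
    have "2 * multiplicity q m = multiplicity q (m^2)"
      using prime_elem_multiplicity_power_distrib[OF prime_imp_prime_elem[OF q], of m 2] m0 by simp
    also have "\<dots> = multiplicity q (n ^ (2 * 2 ^ (s - 1)))" by (simp add: msq)
    also have "\<dots> = 2 * 2 ^ (s - 1) * multiplicity q n"
      using prime_elem_multiplicity_power_distrib[OF prime_imp_prime_elem[OF q], of n] n by simp
    finally show ?thesis by simp
  qed
  have PF: "prime_factors m = P" unfolding P_def by (auto simp: prime_factors_multiplicity mm)
  have tau: "card {d. d dvd m} = t"
    unfolding card_divisors[OF m0] t_def PF using mm by (intro prod.cong refl) (auto simp: P_def)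
  have Tsq: "(divisor_prod m)^2 = m ^ t" using dp_sq[OF m0] tau by simp
  have T4: "(divisor_prod m)^4 = n ^ (2 * 2 ^ (s - 1) * t)"
  proof -
    have "(divisor_prod m)^4 = ((divisor_prod m)^2)^2" by (simp flip: power_mult)
    also have "\<dots> = (m^2)^t" by (simp add: Tsq flip: power_mult) (simp add: mult.commute)
    also have "\<dots> = n ^ (2 * 2 ^ (s - 1) * t)" by (simp add: msq flip: power_mult)
    finally show ?thesis .
  qed
  have "divisor_prod m = n ^ K \<longleftrightarrow> (divisor_prod m)^4 = (n ^ K)^4"
    by (rule power_eq_iff_eq_base[symmetric]) auto
  also have "\<dots> \<longleftrightarrow> n ^ (2 * 2 ^ (s - 1) * t) = n ^ (4 * K)" by (simp add: T4 flip: power_mult) (simp add: mult.commute)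
  also have "\<dots> \<longleftrightarrow> 2 * 2 ^ (s - 1) * t = 4 * K" using power_inject_exp[OF n1] by blast
  also have "\<dots> \<longleftrightarrow> 4 * K = 2 ^ s * t" using s2 by auto
  finally show ?thesis unfolding T0Tstar_perfect_def m_def s_def t_def P_def using n1 by auto
qed



lemma pf_prod:
  fixes S :: "nat set"
  assumes fin: "finite S" and pr: "\<And>x. x \<in> S \<Longrightarrow> prime x" and pos: "\<And>x. x \<in> S \<Longrightarrow> g x > 0"
  shows "prime_factors (\<Prod>p\<in>S. p ^ g p) = S" "\<And>q. q \<in> S \<Longrightarrow> multiplicity q (\<Prod>p\<in>S. p ^ g p) = g q"
proof -
  have m: "multiplicity q (\<Prod>p\<in>S. p ^ g p) = (if q \<in> S then g q else 0)" if "prime q" for q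
    using fin pr that by (rule mpp)
  show "prime_factors (\<Prod>p\<in>S. p ^ g p) = S"
    using pr pos by (auto simp: prime_factors_multiplicity m split: if_splits)
  show "\<And>q. q \<in> S \<Longrightarrow> multiplicity q (\<Prod>p\<in>S. p ^ g p) = g q" using m pr by simp
qed

lemma pf_nonempty:
  fixes n :: nat assumes "n > 1" shows "card (prime_factors n) \<ge> 1"
proof -
  obtain p0 where p0: "prime p0" "p0 dvd n" using prime_factor_nat[of n] assms by auto
  have "p0 \<in> prime_factors n" using p0 assms by (auto simp: in_prime_factors_iff)
  moreover have "finite (prime_factors n)" by simp
  ultimately have "card (prime_factors n) > 0" by (auto simp: card_gt_0_iff)
  thus ?thesis by simp
qed

lemma pk2:
  fixes p k :: nat assumes "0 < k" "prime p" shows "2 \<le> p ^ k"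
proof -
  have "p \<ge> 2" using assms prime_ge_2_nat by blast
  moreover have "p \<le> p ^ k" using assms \<open>p \<ge> 2\<close> by (cases k) auto
  ultimately show ?thesis by linarith
qed

lemma part1:
  fixes k p p1 :: nat
  assumes k: "0 < k" and p: "prime p" and p1: "prime p1"
  shows "T0Tstar_perfect (p ^ k) (p1 ^ (2 * p ^ k - 1))"
proof -
  define e where "e = 2 * p ^ k - 1"
  have pk: "2 \<le> p ^ k" using pk2[OF k p] .
  hence e1: "e \<ge> 1" unfolding e_def by simp
  have n: "p1 ^ e = (\<Prod>q\<in>{p1}. q ^ (\<lambda>_. e) q)" by simp
  have PF: "prime_factors (p1 ^ e) = {p1}" and MU: "multiplicity p1 (p1 ^ e) = e"
    using pf_prod[of "{p1}" "\<lambda>_. e"] p1 e1 unfolding n[symmetric] by auto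
  have n1: "p1 ^ e > 1" using prime_gt_1_nat[OF p1] e1 by (intro one_less_power) auto
  show ?thesis unfolding e_def[symmetric] crit[OF n1] PF using pk MU
    by (simp add: e_def)
qed

lemma odd_half:
  fixes p a :: nat assumes "odd p" "p > 1" "a > 0"
  shows "2 * ((p ^ a - 1) div 2) + 1 = p ^ a" "(p ^ a - 1) div 2 > 0"
proof -
  have o: "odd (p ^ a)" using assms by simp
  have "p ^ a \<ge> p" using assms by (cases a) auto
  hence "p ^ a \<ge> 3" using assms by presburger
  with o show "2 * ((p ^ a - 1) div 2) + 1 = p ^ a" "(p ^ a - 1) div 2 > 0" by presburger+
qed

lemma part2:
  fixes k p p1 p2 a1 a2 :: nat
  assumes p: "prime p" and op: "odd p" and p1: "prime p1" and p2: "prime p2" and ne: "p1 \<noteq> p2"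
    and a: "0 < a1" "0 < a2" "a1 + a2 = k"
  shows "T0Tstar_perfect (p ^ k) (p1 ^ ((p ^ a1 - 1) div 2) * p2 ^ ((p ^ a2 - 1) div 2))"
proof -
  define e1 where "e1 = (p ^ a1 - 1) div 2"
  define e2 where "e2 = (p ^ a2 - 1) div 2"
  have p1': "p > 1" using p prime_gt_1_nat by blast
  note h1 = odd_half[OF op p1' a(1), folded e1_def]
  note h2 = odd_half[OF op p1' a(2), folded e2_def]
  define g where "g = (\<lambda>q. if q = p1 then e1 else e2)"
  have n: "p1 ^ e1 * p2 ^ e2 = (\<Prod>q\<in>{p1, p2}. q ^ g q)" using ne by (simp add: g_def)
  have fin: "finite {p1, p2}" by simp
  have pr: "\<And>x. x \<in> {p1,p2} \<Longrightarrow> prime x" using p1 p2 by auto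
  have gp: "\<And>x. x \<in> {p1,p2} \<Longrightarrow> g x > 0" using h1 h2 by (auto simp: g_def)
  note pp = pf_prod[OF fin pr gp]
  have PF: "prime_factors (p1 ^ e1 * p2 ^ e2) = {p1, p2}" unfolding n by (rule pp(1))
  have MU: "\<And>q. q \<in> {p1, p2} \<Longrightarrow> multiplicity q (p1 ^ e1 * p2 ^ e2) = g q" unfolding n by (rule pp(2))
  have "p1 ^ e1 > 1" using prime_gt_1_nat[OF p1] h1 by (intro one_less_power) auto
  moreover have "p2 ^ e2 > 0" using p2 prime_gt_0_nat by simp
  ultimately have n1: "p1 ^ e1 * p2 ^ e2 > 1" by (metis less_1_mult One_nat_def Suc_leI le_neq_implies_less mult.right_neutral)
  have k: "k > 0" using a by simp
  have "(\<Prod>q\<in>{p1, p2}. multiplicity q (p1 ^ e1 * p2 ^ e2) * 2 ^ (card {p1, p2} - 1) + 1)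
        = (2 * e1 + 1) * (2 * e2 + 1)" using ne MU by (simp add: g_def mult.commute)
  also have "\<dots> = p ^ k" using h1 h2 a(3) by (simp flip: power_add)
  finally have X: "(\<Prod>q\<in>{p1, p2}. multiplicity q (p1 ^ e1 * p2 ^ e2) * 2 ^ (card {p1, p2} - 1) + 1) = p ^ k" .
  show ?thesis unfolding e1_def[symmetric] e2_def[symmetric] crit[OF n1] PF X
    using pk2[OF k p] ne by simp
qed



lemma part3:
  fixes k p n :: nat
  assumes k: "0 < k" and p: "prime p" and n1: "1 < n" and perf: "T0Tstar_perfect (p ^ k) n"
  shows "(\<exists>p1::nat. prime p1 \<and> n = p1 ^ (2 * p ^ k - 1))
        \<or> (odd p \<and> (\<exists>p1 p2 a1 a2 :: nat. prime p1 \<and> prime p2 \<and> p1 \<noteq> p2 \<and> 0 < a1 \<and> 0 < a2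
              \<and> a1 + a2 = k \<and> n = p1 ^ ((p ^ a1 - 1) div 2) * p2 ^ ((p ^ a2 - 1) div 2)))"
proof -
  define P where "P = prime_factors n"
  define s where "s = card P"
  define X where "X = (\<Prod>q\<in>P. multiplicity q n * 2 ^ (s - 1) + 1)"
  have n0: "n > 0" using n1 by simp
  have eq: "4 * p ^ k = 2 ^ s * X" using perf unfolding crit[OF n1] P_def s_def X_def by simp
  have s1: "s \<ge> 1" using pf_nonempty[OF n1] unfolding s_def P_def .
  have finP: "finite P" unfolding P_def by simp
  have mpos: "\<And>q. q \<in> P \<Longrightarrow> multiplicity q n > 0" unfolding P_def by (auto simp: prime_factors_multiplicity)
  have prP: "\<And>q. q \<in> P \<Longrightarrow> prime q" unfolding P_def by auto
  have nfac: "n = (\<Prod>q\<in>P. q ^ multiplicity q n)" unfolding P_def using prime_factorization_nat[OF n0] .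
  have p1: "p > 1" using p prime_gt_1_nat by blast
  consider "s = 1" | "s = 2" | "s \<ge> 3" using s1 by linarith
  then show ?thesis
  proof cases
    case 1
    then obtain q where Pq: "P = {q}" unfolding s_def using card_1_singletonE by blast
    have "4 * p ^ k = 2 * (multiplicity q n + 1)" using eq 1 unfolding X_def Pq by simp
    hence f: "multiplicity q n = 2 * p ^ k - 1" by simp
    have "n = q ^ multiplicity q n" using nfac unfolding Pq by simp
    hence "n = q ^ (2 * p ^ k - 1)" unfolding f .
    moreover have "prime q" using prP Pq by auto
    ultimately show ?thesis by blast
  next
    case 2
    then obtain q1 q2 where Pq: "P = {q1, q2}" and ne: "q1 \<noteq> q2" unfolding s_def by (auto simp: card_2_iff)
    define f1 where "f1 = multiplicity q1 n"
    define f2 where "f2 = multiplicity q2 n"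
    have f1: "f1 > 0" and f2: "f2 > 0" using mpos Pq unfolding f1_def f2_def by auto
    have "4 * p ^ k = 4 * ((2 * f1 + 1) * (2 * f2 + 1))"
      using eq 2 ne unfolding X_def Pq f1_def f2_def by (simp add: mult.commute)
    hence pk: "p ^ k = (2 * f1 + 1) * (2 * f2 + 1)" by simp
    have "2 * f1 + 1 dvd p ^ k" unfolding pk by (rule dvd_triv_left)
    then obtain a1 where a1: "a1 \<le> k" "2 * f1 + 1 = p ^ a1" using divides_primepow_nat[OF p] by blast
    have "2 * f2 + 1 dvd p ^ k" unfolding pk by (rule dvd_triv_right)
    then obtain a2 where a2: "a2 \<le> k" "2 * f2 + 1 = p ^ a2" using divides_primepow_nat[OF p] by blast
    have a1p: "a1 > 0" using a1 f1 by (cases a1) auto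
    have a2p: "a2 > 0" using a2 f2 by (cases a2) auto
    have "p ^ k = p ^ (a1 + a2)" unfolding pk power_add a1(2)[symmetric] a2(2)[symmetric] ..
    hence ak: "a1 + a2 = k" using power_inject_exp[OF p1] by simp
    have "odd (p ^ k)" using pk by simp
    hence op: "odd p" using k by simp
    have e1: "(p ^ a1 - 1) div 2 = f1" using a1(2) by presburger
    have e2: "(p ^ a2 - 1) div 2 = f2" using a2(2) by presburger
    have "n = q1 ^ multiplicity q1 n * q2 ^ multiplicity q2 n" using nfac ne unfolding Pq by simp
    hence "n = q1 ^ f1 * q2 ^ f2" unfolding f1_def f2_def .
    hence "n = q1 ^ ((p ^ a1 - 1) div 2) * q2 ^ ((p ^ a2 - 1) div 2)" unfolding e1 e2 .
    moreover have "prime q1" "prime q2" using prP Pq by auto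
    ultimately show ?thesis using op ne a1p a2p ak by blast
  next
    case 3
    have oddX: "odd X" unfolding X_def using finP 3
      by (auto simp: even_prod_iff)
    have "P \<noteq> {}" using s1 unfolding s_def by auto
    then obtain q0 where q0: "q0 \<in> P" by blast
    have "multiplicity q0 n * 2 ^ (s - 1) + 1 dvd X" unfolding X_def using finP q0 by (rule dvd_prodI)
    moreover have "X > 0" using oddX by (cases X) auto
    ultimately have "multiplicity q0 n * 2 ^ (s - 1) + 1 \<le> X" by (rule dvd_imp_le)
    moreover have "multiplicity q0 n * 2 ^ (s - 1) \<ge> 1" using mpos[OF q0] by simp
    ultimately have X2: "X \<ge> 2" by linarith
    have "s = (s - 2) + 2" using 3 by simp
    hence "(2::nat) ^ s = 2 ^ ((s - 2) + 2)" by (rule arg_cong)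
    also have "\<dots> = 4 * 2 ^ (s - 2)" by (simp add: power_add)
    finally have s4: "(2::nat) ^ s = 4 * 2 ^ (s - 2)" .
    have pk: "p ^ k = 2 ^ (s - 2) * X" using eq s4 by simp
    have "(2::nat) dvd 2 ^ (s - 2)" using 3 by simp
    hence "2 dvd p ^ k" unfolding pk by (rule dvd_mult2)
    hence "2 dvd p" using prime_dvd_power_nat_iff[of 2 k p] k by simp
    hence p2: "p = 2" using p unfolding prime_nat_iff by force
    have "X dvd 2 ^ k" using pk p2 by simp
    then obtain i where "X = 2 ^ i" using divides_primepow_nat[OF two_is_prime_nat] by blast
    with oddX X2 show ?thesis by (cases i) auto
  qed
qed

theorem mainTheorem8:
  fixes k p :: nat
  assumes "0 < k" and "prime p"
  shows "(\<forall>p1::nat. prime p1 \<longrightarrow> T0Tstar_perfect (p ^ k) (p1 ^ (2 * p ^ k - 1)))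
    \<and> ((2 \<le> k \<and> odd p) \<longrightarrow>
        (\<forall>p1 p2 a1 a2 :: nat. prime p1 \<and> prime p2 \<and> p1 \<noteq> p2 \<and> 0 < a1 \<and> 0 < a2 \<and> a1 + a2 = k
           \<longrightarrow> T0Tstar_perfect (p ^ k) (p1 ^ ((p ^ a1 - 1) div 2) * p2 ^ ((p ^ a2 - 1) div 2))))
    \<and> (\<forall>n::nat. 1 < n \<and> T0Tstar_perfect (p ^ k) n \<longrightarrow>
        (\<exists>p1::nat. prime p1 \<and> n = p1 ^ (2 * p ^ k - 1))
        \<or> (odd p \<and> (\<exists>p1 p2 a1 a2 :: nat. prime p1 \<and> prime p2 \<and> p1 \<noteq> p2 \<and> 0 < a1 \<and> 0 < a2
              \<and> a1 + a2 = k \<and> n = p1 ^ ((p ^ a1 - 1) div 2) * p2 ^ ((p ^ a2 - 1) div 2))))"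
  proof (intro conjI allI impI)
  fix p1 :: nat assume "prime p1"
  thus "T0Tstar_perfect (p ^ k) (p1 ^ (2 * p ^ k - 1))" using part1 assms by blast
next
  fix p1 p2 a1 a2 :: nat
  assume "2 \<le> k \<and> odd p"
    and "prime p1 \<and> prime p2 \<and> p1 \<noteq> p2 \<and> 0 < a1 \<and> 0 < a2 \<and> a1 + a2 = k"
  thus "T0Tstar_perfect (p ^ k) (p1 ^ ((p ^ a1 - 1) div 2) * p2 ^ ((p ^ a2 - 1) div 2))"
    using part2 assms by blast
next
  fix n :: nat assume "1 < n \<and> T0Tstar_perfect (p ^ k) n"
  thus "(\<exists>p1::nat. prime p1 \<and> n = p1 ^ (2 * p ^ k - 1))
        \<or> (odd p \<and> (\<exists>p1 p2 a1 a2 :: nat. prime p1 \<and> prime p2 \<and> p1 \<noteq> p2 \<and> 0 < a1 \<and> 0 < a2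
              \<and> a1 + a2 = k \<and> n = p1 ^ ((p ^ a1 - 1) div 2) * p2 ^ ((p ^ a2 - 1) div 2)))"
    using part3 assms by blast
qed

end
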